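(* Let $T\in\mathcal{L}(\mathcal{H})$ have closed range and let $n\ge 2$ be an integer. Suppose that $T^*T\big(N(T^{*i})\big)\subset N(T^{*i})$ and $TT^*\big(N(T^{i})\big)\subset N(T^{i})$ for every $i=1,\ldots,n-1$. Then for every $i=1,\ldots,n$, the operator $T^i$ has closed range (so $\omega(T^i)$ is defined) and $\omega(T^i)=\omega(T)^i$.
   Context: $\mathcal{H}$ is a Hilbert space, $\mathcal{L}(\mathcal{H})$ the bounded operators on it; $N(\cdot)$ denotes kernel. For $A$ with closed range, $A^\dagger$ is its Moore–Penrose inverse (unique solution of $AA^\dagger A=A$, $A^\dagger AA^\dagger=A^\dagger$, $(A^\dagger A)^*=A^\dagger A$, $(AA^\dagger)^*=AA^\dagger$), and the Cauchy dual of $A$ is $\omega(A)=A(A^*A)^\dagger=(A^* )^\dagger$. *)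

theory Defs
  imports "HOL-Analysis.Analysis"
begin

text \<open>Bounded operators on a (real) Hilbert space 'a are modelled as functions
  T :: 'a => 'a with bounded_linear T; composition is \<circ>, powers are T ^^ i,
  and the Hilbert adjoint is the library's adjoint.\<close>

definition op_ker :: "('a::real_vector \<Rightarrow> 'b::real_vector) \<Rightarrow> 'a set" where
  "op_ker A = {x. A x = 0}"

definition mp_inverse :: "('a::{real_inner,complete_space} \<Rightarrow> 'a) \<Rightarrow> ('a \<Rightarrow> 'a)" where
  "mp_inverse A = (THE B. bounded_linear B \<and> A \<circ> B \<circ> A = A \<and> B \<circ> A \<circ> B = B \<and>
      adjoint (B \<circ> A) = B \<circ> A \<and> adjoint (A \<circ> B) = A \<circ> B)"

definition cauchy_dual :: "('a::{real_inner,complete_space} \<Rightarrow> 'a) \<Rightarrow> ('a \<Rightarrow> 'a)" where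
  "cauchy_dual A = A \<circ> mp_inverse (adjoint A \<circ> A)"

end

theory Submission
  imports Defs
begin
lemma proj_exists:
  fixes M :: "'a::{real_inner,complete_space} set"
  assumes sub: "subspace M" and cl: "closed M"
  shows "\<exists>p\<in>M. \<forall>m\<in>M. (x - p) \<bullet> m = 0"
proof -
  define D where "D = (\<lambda>m. norm (x - m)) ` M"
  define d where "d = Inf D"
  have "0 \<in> M" using sub by (simp add: subspace_0)
  hence Dne: "D \<noteq> {}" by (auto simp: D_def)
  have Dbdd: "bdd_below D" unfolding D_def by (rule bdd_belowI[of _ 0]) auto
  have dle: "d \<le> norm (x - m)" if "m \<in> M" for m
    unfolding d_def D_def using Dbdd that by (auto intro!: cInf_lower simp: D_def)
  have d0: "0 \<le> d" unfolding d_def using Dne by (auto intro!: cInf_greatest simp: D_def)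
  have "\<exists>m\<in>M. norm (x - m) < d + 1 / real (Suc n)" for n
  proof -
    have "Inf D < d + 1 / real (Suc n)" by (simp add: d_def)
    then obtain t where "t \<in> D" "t < d + 1 / real (Suc n)" using cInf_lessD[OF Dne] by blast
    thus ?thesis by (auto simp: D_def)
  qed
  then obtain s where sM: "\<And>n. s n \<in> M" and sd: "\<And>n. norm (x - s n) < d + 1 / real (Suc n)"
    by metis
  have par: "norm (s a - s b)^2 \<le> 4*d*(1/real (Suc a)) + 2*(1/real (Suc a))^2 + 4*d*(1/real (Suc b)) + 2*(1/real (Suc b))^2" for a b
  proof -
    let ?u = "x - s a" and ?v = "x - s b"
    define \<alpha> where "\<alpha> = 1/real (Suc a)"
    define \<beta> where "\<beta> = 1/real (Suc b)"
    have mid: "(1/2) *\<^sub>R (s a + s b) \<in> M" using sM sub by (simp add: subspace_add subspace_scale)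
    have "d \<le> norm (x - (1/2) *\<^sub>R (s a + s b))" using dle[OF mid] .
    also have "x - (1/2) *\<^sub>R (s a + s b) = (1/2) *\<^sub>R (?u + ?v)"
    proof -
      have hh: "(1/2) *\<^sub>R x + (1/2) *\<^sub>R x = x" by (simp flip: scaleR_add_left)
      show ?thesis by (simp add: scaleR_add_right scaleR_diff_right hh algebra_simps)
    qed
    finally have h: "d \<le> (1/2) * norm (?u + ?v)" by simp
    have pl: "norm (?u - ?v)^2 + norm (?u + ?v)^2 = 2 * norm ?u ^2 + 2 * norm ?v ^2"
      by (simp add: power2_norm_eq_inner inner_diff_left inner_diff_right inner_add_left inner_add_right inner_commute algebra_simps)
    have A: "norm ?u ^2 \<le> (d + \<alpha>)^2" using sd[of a] d0 unfolding \<alpha>_def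
      by (intro power_mono) auto
    have B: "norm ?v ^2 \<le> (d + \<beta>)^2" using sd[of b] d0 unfolding \<beta>_def
      by (intro power_mono) auto
    have C: "(2*d)^2 \<le> norm (?u + ?v)^2" using h d0 by (intro power_mono) auto
    have "norm (s a - s b)^2 = 2 * norm ?u ^2 + 2 * norm ?v ^2 - norm (?u + ?v)^2"
      using pl by (simp add: norm_minus_commute)
    also have "\<dots> \<le> 2 * (d + \<alpha>)^2 + 2 * (d + \<beta>)^2 - (2*d)^2"
      using A B C by linarith
    also have "\<dots> = 4*d*\<alpha> + 2*\<alpha>^2 + 4*d*\<beta> + 2*\<beta>^2"
      by (simp add: power2_eq_square algebra_simps)
    finally show ?thesis unfolding \<alpha>_def \<beta>_def .
  qed
  have "Cauchy s"
  proof (rule metric_CauchyI)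
    fix e :: real assume e: "e > 0"
    obtain N :: nat where N: "(8*d + 4) / e^2 < real N" using reals_Archimedean2 by blast
    have Npos: "(8*d+4) / real (Suc N) < e^2"
    proof -
      have "0 < e^2" using e by simp
      have "(8*d+4) < real N * e^2" using N e by (simp add: divide_less_eq mult.commute)
      also have "\<dots> \<le> real (Suc N) * e^2" using e by (intro mult_right_mono) auto
      finally show ?thesis by (simp add: divide_less_eq mult.commute)
    qed
    show "\<exists>M. \<forall>m\<ge>M. \<forall>n\<ge>M. dist (s m) (s n) < e"
    proof (intro exI allI impI)
      fix a b assume a: "a \<ge> N" and b: "b \<ge> N"
      define \<gamma> where "\<gamma> = 1 / real (Suc N)"
      have q: "1 / real (Suc a) \<le> \<gamma>" "1 / real (Suc b) \<le> \<gamma>"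
        using a b by (auto simp: frac_le \<gamma>_def)
      have g1: "\<gamma> \<le> 1" by (simp add: \<gamma>_def)
      have pos: "0 \<le> 1 / real (Suc a)" "0 \<le> 1 / real (Suc b)" by auto
      have sqa: "t^2 \<le> \<gamma>" if "0 \<le> t" "t \<le> \<gamma>" for t
      proof -
        have "t * t \<le> t * 1" using that g1 by (intro mult_left_mono) auto
        thus ?thesis using that by (simp add: power2_eq_square)
      qed
      define A where "A = 1 / real (Suc a)"
      define B where "B = 1 / real (Suc b)"
      have sq: "A^2 \<le> \<gamma>" "B^2 \<le> \<gamma>"
        using sqa q pos unfolding A_def B_def by blast+
      have dd: "d*A \<le> d*\<gamma>" "d*B \<le> d*\<gamma>" unfolding A_def B_def
        by (rule mult_left_mono[OF q(1) d0], rule mult_left_mono[OF q(2) d0])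
      have "4*d*A + 2*A^2 + 4*d*B + 2*B^2 \<le> (8*d+4) * \<gamma>"
        using dd sq by (simp add: algebra_simps)
      hence "norm (s a - s b)^2 \<le> (8*d+4) / real (Suc N)"
        using par[of a b] unfolding A_def B_def by (simp add: \<gamma>_def)
      also have "\<dots> < e^2" by (rule Npos)
      finally have "norm (s a - s b) < e" using e by (simp add: power_less_imp_less_base)
      thus "dist (s a) (s b) < e" by (simp add: dist_norm)
    qed
  qed
  then obtain p where lim: "s \<longlonglongrightarrow> p" using Cauchy_convergent_iff convergent_def by blast
  have pM: "p \<in> M" using cl lim sM closed_sequentially by blast
  have pmin: "norm (x - p) \<le> norm (x - m)" if "m \<in> M" for m
  proof -
    have l1: "(\<lambda>n. norm (x - s n)) \<longlonglongrightarrow> norm (x - p)"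
      by (intro tendsto_intros lim)
    have l2: "(\<lambda>n. d + 1 / real (Suc n)) \<longlonglongrightarrow> d + 0"
      by (intro tendsto_intros LIMSEQ_inverse_real_of_nat[unfolded inverse_eq_divide])
    have "norm (x - p) \<le> d + 0"
      by (rule LIMSEQ_le[OF l1 l2]) (use sd less_imp_le in blast)
    thus ?thesis using dle[OF that] by simp
  qed
  show ?thesis
  proof (intro bexI[OF _ pM] ballI)
    fix m assume mM: "m \<in> M"
    show "(x - p) \<bullet> m = 0"
    proof (cases "m = 0")
      case True thus ?thesis by simp
    next
      case False
      define a where "a = (x - p) \<bullet> m"
      define t where "t = a / (m \<bullet> m)"
      have mm: "m \<bullet> m > 0" using False by simp
      have "p + t *\<^sub>R m \<in> M" using pM mM sub by (simp add: subspace_add subspace_scale)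
      from pmin[OF this] have "norm (x - p)^2 \<le> norm (x - p - t *\<^sub>R m)^2"
        by (simp add: diff_diff_eq power_mono)
      also have "norm (x - p - t *\<^sub>R m)^2 = norm (x - p)^2 - 2 * t * a + t^2 * (m \<bullet> m)"
        unfolding power2_norm_eq_inner a_def
        by (simp add: inner_diff_left inner_diff_right inner_commute power2_eq_square algebra_simps)
      finally have "0 \<le> - 2 * t * a + t^2 * (m \<bullet> m)" by simp
      also have "- 2 * t * a + t^2 * (m \<bullet> m) = -(a^2) / (m \<bullet> m)"
        using mm by (simp add: t_def power2_eq_square field_simps)
      finally have h: "a^2 / (m \<bullet> m) \<le> 0" by simp
      have "a \<noteq> 0 \<Longrightarrow> a^2/(m \<bullet> m) > 0" using mm by simp
      hence "a = 0" using h by force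
      thus ?thesis by (simp add: a_def)
    qed
  qed
qed

lemma riesz:
  fixes f :: "'a::{real_inner,complete_space} \<Rightarrow> real"
  assumes bl: "bounded_linear f"
  shows "\<exists>z. \<forall>x. f x = x \<bullet> z"
proof (cases "\<forall>x. f x = 0")
  case True then show ?thesis by (intro exI[of _ 0]) simp
next
  case False
  then obtain u where u: "f u \<noteq> 0" by auto
  interpret f: bounded_linear f by (rule bl)
  let ?K = "{x. f x = 0}"
  have subK: "subspace ?K" by (auto simp: subspace_def f.add f.scale f.zero)
  have "closed (f -` {0})" by (rule continuous_closed_vimage) (auto intro: f.continuous)
  moreover have "f -` {0} = ?K" by auto
  ultimately have clK: "closed ?K" by simp
  obtain p where p: "p \<in> ?K" "\<forall>m\<in>?K. (u - p) \<bullet> m = 0" using proj_exists[OF subK clK] by blast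
  define q where "q = u - p"
  have fq: "f q = f u" using p by (simp add: q_def f.diff)
  have "q \<noteq> 0" using fq u by auto
  hence qn: "q \<bullet> q \<noteq> 0" by simp
  define z where "z = (f q / (q \<bullet> q)) *\<^sub>R q"
  show ?thesis
  proof (intro exI allI)
    fix x
    have "f (x - (f x / f q) *\<^sub>R q) = 0" using fq u by (simp add: f.diff f.scale)
    hence "q \<bullet> (x - (f x / f q) *\<^sub>R q) = 0" using p(2) q_def by blast
    hence "x \<bullet> q = (f x / f q) * (q \<bullet> q)" by (simp add: inner_diff_right inner_commute)
    thus "f x = x \<bullet> z" using qn fq u by (simp add: z_def field_simps)
  qed
qed

lemma adjoint_exists:
  fixes T :: "'a::{real_inner,complete_space} \<Rightarrow> 'b::real_inner"
  assumes "bounded_linear T"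
  shows "\<exists>g. \<forall>x y. T x \<bullet> y = x \<bullet> g y"
proof -
  have "\<forall>y. \<exists>z. \<forall>x. T x \<bullet> y = x \<bullet> z"
  proof
    fix y
    have "bounded_linear (\<lambda>x. T x \<bullet> y)"
      using bounded_linear_compose[OF bounded_linear_inner_left[of y] assms] by (simp add: o_def)
    from riesz[OF this] show "\<exists>z. \<forall>x. T x \<bullet> y = x \<bullet> z" .
  qed
  thus ?thesis by metis
qed

lemma adj_works:
  fixes T :: "'a::{real_inner,complete_space} \<Rightarrow> 'b::real_inner"
  assumes "bounded_linear T"
  shows "T x \<bullet> y = x \<bullet> adjoint T y"
  using someI_ex[OF adjoint_exists[OF assms]] unfolding adjoint_def by blast

lemma adj_works2:
  fixes T :: "'a::{real_inner,complete_space} \<Rightarrow> 'b::real_inner"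
  assumes "bounded_linear T"
  shows "adjoint T y \<bullet> x = y \<bullet> T x"
  using adj_works[OF assms] by (simp add: inner_commute)

lemma adj_bl:
  fixes T :: "'a::{real_inner,complete_space} \<Rightarrow> 'b::real_inner"
  assumes bl: "bounded_linear T"
  shows "bounded_linear (adjoint T)"
proof -
  have lin: "linear (adjoint T)"
  proof
    fix a b
    show "adjoint T (a + b) = adjoint T a + adjoint T b"
      by (rule vector_eq_ldot[THEN iffD1], intro allI) (simp add: adj_works[OF bl, symmetric] inner_add_left inner_add_right)
    fix r
    show "adjoint T (r *\<^sub>R b) = r *\<^sub>R adjoint T b"
      by (rule vector_eq_ldot[THEN iffD1], intro allI) (simp add: adj_works[OF bl, symmetric])
  qed
  obtain K where K: "\<And>x. norm (T x) \<le> norm x * K" "K > 0"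
    using bounded_linear.pos_bounded[OF bl] by blast
  have "norm (adjoint T y) \<le> norm y * K" for y
  proof (cases "adjoint T y = 0")
    case True then show ?thesis using K by simp
  next
    case False
    have "norm (adjoint T y)^2 = T (adjoint T y) \<bullet> y"
      by (simp add: adj_works[OF bl] power2_norm_eq_inner)
    also have "\<dots> \<le> norm (T (adjoint T y)) * norm y" by (rule norm_cauchy_schwarz)
    also have "\<dots> \<le> norm (adjoint T y) * K * norm y" using K by (simp add: mult_right_mono)
    finally have "norm (adjoint T y) * norm (adjoint T y) \<le> norm (adjoint T y) * (norm y * K)"
      by (simp add: power2_eq_square algebra_simps)
    thus ?thesis using False by simp
  qed
  thus ?thesis using lin by (intro bounded_linear_intro[where K=K]) (auto simp: linear_add linear_scale)
qed

lemma adj_adj: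
  fixes T :: "'a::{real_inner,complete_space} \<Rightarrow> 'b::{real_inner,complete_space}"
  assumes "bounded_linear T"
  shows "adjoint (adjoint T) = T"
  by (rule adjoint_unique) (simp add: adj_works2[OF assms])

lemma adj_comp:
  fixes f :: "'b::{real_inner,complete_space} \<Rightarrow> 'c::{real_inner,complete_space}"
    and g :: "'a::{real_inner,complete_space} \<Rightarrow> 'b"
  assumes "bounded_linear f" "bounded_linear g"
  shows "adjoint (f \<circ> g) = adjoint g \<circ> adjoint f"
  by (rule adjoint_unique) (simp add: adj_works[OF assms(1)] adj_works[OF assms(2)])

lemma adj_id: "adjoint (id :: 'a::real_inner \<Rightarrow> 'a) = id"
  using adjoint_unique[of "id::'a \<Rightarrow> 'a" id] by simp

lemma bl_id: "bounded_linear id"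
  unfolding id_def by (rule bounded_linear_ident)

lemma bl_comp: "bounded_linear f \<Longrightarrow> bounded_linear g \<Longrightarrow> bounded_linear (f \<circ> g)"
  using bounded_linear_compose[of f g] by (simp add: o_def)

lemma bl_pow: "bounded_linear (T::'a::real_normed_vector \<Rightarrow> 'a) \<Longrightarrow> bounded_linear (T ^^ n)"
  by (induction n) (simp_all add: bl_id bl_comp)

lemma adj_pow:
  fixes T :: "'a::{real_inner,complete_space} \<Rightarrow> 'a"
  assumes "bounded_linear T"
  shows "adjoint (T ^^ n) = adjoint T ^^ n"
proof (induction n)
  case 0 then show ?case by (simp only: funpow.simps(1) adj_id)
next
  case (Suc n)
  have "adjoint (T ^^ Suc n) = adjoint (T ^^ n) \<circ> adjoint T"
    by (simp add: adj_comp[OF assms bl_pow[OF assms]])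
  also have "\<dots> = adjoint T ^^ Suc n" by (simp only: Suc funpow_Suc_right)
  finally show ?case .
qed

lemma selfadj_iff:
  fixes F :: "'a::{real_inner,complete_space} \<Rightarrow> 'a"
  assumes "bounded_linear F"
  shows "adjoint F = F \<longleftrightarrow> (\<forall>x y. F x \<bullet> y = x \<bullet> F y)"
  using adj_works[OF assms] adjoint_unique[of F F] by metis

type_synonym 'a op = "'a \<Rightarrow> 'a"

definition is_mp :: "('a::{real_inner,complete_space}) op \<Rightarrow> 'a op \<Rightarrow> bool" where
  "is_mp A B \<longleftrightarrow> bounded_linear B \<and> A \<circ> B \<circ> A = A \<and> B \<circ> A \<circ> B = B \<and>
      adjoint (B \<circ> A) = B \<circ> A \<and> adjoint (A \<circ> B) = A \<circ> B"

lemma veq: "(\<And>z. z \<bullet> u = z \<bullet> (v::'a::real_inner)) \<Longrightarrow> u = v"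
  using vector_eq_ldot by blast

context
  fixes A B :: "('a::{real_inner,complete_space}) op"
  assumes blA: "bounded_linear A"
begin

lemma is_mpD:
  assumes "is_mp A B"
  shows "bounded_linear B" "A (B (A x)) = A x" "B (A (B x)) = B x"
    "B (A x) \<bullet> y = x \<bullet> B (A y)" "A (B x) \<bullet> y = x \<bullet> A (B y)"
proof -
  show blB: "bounded_linear B" using assms by (simp add: is_mp_def)
  show "A (B (A x)) = A x" using assms unfolding is_mp_def by (metis comp_apply)
  show "B (A (B x)) = B x" using assms unfolding is_mp_def by (metis comp_apply)
  have "adjoint (B \<circ> A) = B \<circ> A" using assms by (simp add: is_mp_def)
  thus "B (A x) \<bullet> y = x \<bullet> B (A y)"
    using selfadj_iff[OF bl_comp[OF blB blA]] by simp
  have "adjoint (A \<circ> B) = A \<circ> B" using assms by (simp add: is_mp_def)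
  thus "A (B x) \<bullet> y = x \<bullet> A (B y)"
    using selfadj_iff[OF bl_comp[OF blA blB]] by simp
qed

lemma is_mpI:
  assumes blB: "bounded_linear B" and "\<And>x. A (B (A x)) = A x" "\<And>x. B (A (B x)) = B x"
    "\<And>x y. B (A x) \<bullet> y = x \<bullet> B (A y)" "\<And>x y. A (B x) \<bullet> y = x \<bullet> A (B y)"
  shows "is_mp A B"
  unfolding is_mp_def
  using assms selfadj_iff[OF bl_comp[OF blB blA]] selfadj_iff[OF bl_comp[OF blA blB]]
  by (auto simp: fun_eq_iff)

lemma is_mp_adjfacts:
  assumes mp: "is_mp A B"
  shows "adjoint B (adjoint A y) = A (B y)"
    "adjoint A (adjoint B y) = B (A y)"
    "adjoint A (adjoint B (adjoint A y)) = adjoint A y"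
    "adjoint B (adjoint A (adjoint B y)) = adjoint B y"
proof -
  note D = is_mpD[OF mp]
  note wA = adj_works[OF blA] and wB = adj_works[OF D(1)]
  show "adjoint B (adjoint A y) = A (B y)"
    by (rule veq) (simp add: wA[symmetric] wB[symmetric] D(5))
  show "adjoint A (adjoint B y) = B (A y)"
    by (rule veq) (simp add: wA[symmetric] wB[symmetric] D(4))
  show "adjoint A (adjoint B (adjoint A y)) = adjoint A y"
    by (rule veq) (simp add: wA[symmetric] wB[symmetric] D(2))
  show "adjoint B (adjoint A (adjoint B y)) = adjoint B y"
    by (rule veq) (simp add: wA[symmetric] wB[symmetric] D(3))
qed

end

lemma is_mp_adj:
  fixes A B :: "('a::{real_inner,complete_space}) op"
  assumes blA: "bounded_linear A" and mp: "is_mp A B"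
  shows "is_mp (adjoint A) (adjoint B)"
proof -
  note D = is_mpD[OF blA mp] and F = is_mp_adjfacts[OF blA mp]
  have blA': "bounded_linear (adjoint A)" by (rule adj_bl[OF blA])
  show ?thesis
  proof (rule is_mpI[OF blA' adj_bl[OF D(1)]])
    fix x y
    show "adjoint A (adjoint B (adjoint A x)) = adjoint A x" by (rule F(3))
    show "adjoint B (adjoint A (adjoint B x)) = adjoint B x" by (rule F(4))
    show "adjoint B (adjoint A x) \<bullet> y = x \<bullet> adjoint B (adjoint A y)" by (simp add: F(1) D(5))
    show "adjoint A (adjoint B x) \<bullet> y = x \<bullet> adjoint A (adjoint B y)" by (simp add: F(2) D(4))
  qed
qed


lemma mp_unique:
  fixes A X Y :: "('a::{real_inner,complete_space}) op"
  assumes blA: "bounded_linear A" and mX: "is_mp A X" and mY: "is_mp A Y"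
  shows "X = Y"
proof
  fix y
  note DX = is_mpD[OF blA mX] and DY = is_mpD[OF blA mY]
  note FX = is_mp_adjfacts[OF blA mX] and FY = is_mp_adjfacts[OF blA mY]
  have FX3: "adjoint A (adjoint X (adjoint A w)) = adjoint A w" for w by (rule FX(3))
  have FY3: "adjoint A (adjoint Y (adjoint A w)) = adjoint A w" for w by (rule FY(3))
  have "X y = X (A (X y))" by (simp add: DX(3))
  also have "\<dots> = X (adjoint X (adjoint A y))" by (simp add: FX(1))
  also have "\<dots> = X (adjoint X (adjoint A (adjoint Y (adjoint A y))))" by (simp add: FY3)
  also have "\<dots> = X (A (X (adjoint Y (adjoint A y))))" by (simp add: FX(1))
  also have "\<dots> = X (adjoint Y (adjoint A y))" by (simp add: DX(3))
  also have "\<dots> = X (A (Y y))" by (simp add: FY(1))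
  finally have 1: "X y = X (A (Y y))" .
  have "Y y = Y (A (Y y))" by (simp add: DY(3))
  also have "\<dots> = adjoint A (adjoint Y (Y y))" by (simp add: FY(2))
  also have "\<dots> = adjoint A (adjoint X (adjoint A (adjoint Y (Y y))))" by (simp add: FX3)
  also have "\<dots> = adjoint A (adjoint X (Y (A (Y y))))" by (simp add: FY(2))
  also have "\<dots> = adjoint A (adjoint X (Y y))" by (simp add: DY(3))
  also have "\<dots> = X (A (Y y))" by (simp add: FX(2))
  finally show "X y = Y y" using 1 by simp
qed

lemma mp_inverse_eq:
  fixes A X :: "('a::{real_inner,complete_space}) op"
  assumes blA: "bounded_linear A" and mX: "is_mp A X"
  shows "mp_inverse A = X"
  unfolding mp_inverse_def
proof (rule the_equality)
  show "bounded_linear X \<and> A \<circ> X \<circ> A = A \<and> X \<circ> A \<circ> X = X \<and> adjoint (X \<circ> A) = X \<circ> A \<and> adjoint (A \<circ> X) = A \<circ> X"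
    using mX by (simp add: is_mp_def)
  fix B assume "bounded_linear B \<and> A \<circ> B \<circ> A = A \<and> B \<circ> A \<circ> B = B \<and> adjoint (B \<circ> A) = B \<circ> A \<and> adjoint (A \<circ> B) = A \<circ> B"
  hence "is_mp A B" by (simp add: is_mp_def)
  thus "B = X" using mp_unique[OF blA _ mX] by blast
qed

lemma mp_gram:
  fixes S G :: "('a::{real_inner,complete_space}) op"
  assumes blS: "bounded_linear S" and mp: "is_mp S G"
  shows "is_mp (adjoint S \<circ> S) (G \<circ> adjoint G)"
proof -
  note D = is_mpD[OF blS mp] and F = is_mp_adjfacts[OF blS mp]
  have blG: "bounded_linear G" by (rule D(1))
  have blM: "bounded_linear (adjoint S \<circ> S)" by (rule bl_comp[OF adj_bl[OF blS] blS])
  have e1: "adjoint G (adjoint S (S x)) = S x" for x by (simp add: F(1) D(2))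
  have e0: "S (G (adjoint G x)) = adjoint G x" for x by (metis F(1) F(4))
  have e2: "(adjoint S \<circ> S) ((G \<circ> adjoint G) x) = G (S x)" for x
    by (simp add: e0 F(2))
  have e3: "(G \<circ> adjoint G) ((adjoint S \<circ> S) x) = G (S x)" for x
    by (simp add: e1)
  show ?thesis
  proof (rule is_mpI[OF blM bl_comp[OF blG adj_bl[OF blG]]])
    fix x y
    show "(adjoint S \<circ> S) ((G \<circ> adjoint G) ((adjoint S \<circ> S) x)) = (adjoint S \<circ> S) x"
      by (simp only: e3) (simp add: D(2))
    show "(G \<circ> adjoint G) ((adjoint S \<circ> S) ((G \<circ> adjoint G) x)) = (G \<circ> adjoint G) x"
      by (simp only: e3) (simp add: D(3))
    show "(G \<circ> adjoint G) ((adjoint S \<circ> S) x) \<bullet> y = x \<bullet> (G \<circ> adjoint G) ((adjoint S \<circ> S) y)"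
      by (simp only: e3) (rule D(4))
    show "(adjoint S \<circ> S) ((G \<circ> adjoint G) x) \<bullet> y = x \<bullet> (adjoint S \<circ> S) ((G \<circ> adjoint G) y)"
      by (simp only: e2) (rule D(4))
  qed
qed

lemma cauchy_dual_eq:
  fixes S G :: "('a::{real_inner,complete_space}) op"
  assumes blS: "bounded_linear S" and mp: "is_mp S G"
  shows "cauchy_dual S = adjoint G"
proof -
  note D = is_mpD[OF blS mp] and F = is_mp_adjfacts[OF blS mp]
  have "mp_inverse (adjoint S \<circ> S) = G \<circ> adjoint G"
    by (rule mp_inverse_eq[OF bl_comp[OF adj_bl[OF blS] blS] mp_gram[OF blS mp]])
  thus ?thesis unfolding cauchy_dual_def
    by (auto simp: fun_eq_iff F(1)[symmetric] F(4))
qed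

lemma mp_range_closed:
  fixes S G :: "('a::{real_inner,complete_space}) op"
  assumes blS: "bounded_linear S" and mp: "is_mp S G"
  shows "closed (range S)"
proof -
  note D = is_mpD[OF blS mp]
  have "range S = (\<lambda>z. S (G z) - z) -` {0}"
    by (auto simp: D(2)) (metis rangeI)
  moreover have "closed ((\<lambda>z. S (G z) - z) -` {0})"
    by (rule continuous_closed_vimage) (auto intro!: continuous_intros
        bounded_linear.continuous[OF blS] bounded_linear.continuous[OF D(1)])
  ultimately show ?thesis by simp
qed

lemma mp_in_range:
  fixes S G :: "('a::{real_inner,complete_space}) op"
  assumes blS: "bounded_linear S" and mp: "is_mp S G"
    and orth: "\<And>w. adjoint S w = 0 \<Longrightarrow> z \<bullet> w = 0"
  shows "S (G z) = z"
proof -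
  note D = is_mpD[OF blS mp] and F = is_mp_adjfacts[OF blS mp]
  interpret S: bounded_linear S by (rule blS)
  interpret S': bounded_linear "adjoint S" by (rule adj_bl[OF blS])
  define v where "v = z - S (G z)"
  have "S (G z) = adjoint G (adjoint S z)" by (simp add: F(1))
  hence "adjoint S (S (G z)) = adjoint S z" using F(3) by simp
  hence "adjoint S v = 0"
    by (simp add: v_def S'.diff)
  hence zv: "z \<bullet> v = 0" by (rule orth)
  have "S (G z) \<bullet> S (G z) = z \<bullet> S (G z)"
    by (simp add: D(5) D(2))
  hence "S (G z) \<bullet> v = 0" by (simp add: v_def inner_diff_right inner_commute)
  hence "v \<bullet> v = 0" using zv by (simp add: v_def inner_diff_left)
  thus ?thesis by (simp add: v_def)
qed

lemma greville:
  fixes A B GA GB :: "('a::{real_inner,complete_space}) op"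
  assumes blA: "bounded_linear A" and blB: "bounded_linear B"
    and mA: "is_mp A GA" and mB: "is_mp B GB"
    and C1: "\<And>x. \<exists>u. adjoint A (A (B x)) = B u"
    and C2: "\<And>y. \<exists>v. B (adjoint B (adjoint A y)) = adjoint A v"
  shows "is_mp (A \<circ> B) (GB \<circ> GA)"
proof -
  note DA = is_mpD[OF blA mA] and FA = is_mp_adjfacts[OF blA mA]
  note DB = is_mpD[OF blB mB] and FB = is_mp_adjfacts[OF blB mB]
  note wA = adj_works[OF blA] and wB = adj_works[OF blB]
  note wGA = adj_works[OF DA(1)] and wGB = adj_works[OF DB(1)]
  interpret A: bounded_linear A by (rule blA)
  interpret B: bounded_linear B by (rule blB)
  interpret GA: bounded_linear GA by (rule DA(1))
  interpret GB: bounded_linear GB by (rule DB(1))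
  interpret A': bounded_linear "adjoint A" by (rule adj_bl[OF blA])
  define P where "P = (\<lambda>x. B (GB x))"
  define Q where "Q = (\<lambda>x. GA (A x))"
  define M where "M = (\<lambda>x. adjoint A (A x))"
  define N where "N = (\<lambda>x. B (adjoint B x))"
  have Psa: "P x \<bullet> y = x \<bullet> P y" for x y unfolding P_def by (rule DB(5))
  have Qsa: "Q x \<bullet> y = x \<bullet> Q y" for x y unfolding Q_def by (rule DA(4))
  have Msa: "M x \<bullet> y = x \<bullet> M y" for x y unfolding M_def by (simp add: wA[symmetric] inner_commute)
  have Nsa: "N x \<bullet> y = x \<bullet> N y" for x y unfolding N_def
    using wB[of "adjoint B x" y] wB[of "adjoint B y" x] by (simp add: inner_commute)
  have PP: "P (P x) = P x" for x unfolding P_def by (simp add: DB(2))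
  have QQ: "Q (Q x) = Q x" for x unfolding Q_def by (simp add: DA(2))
  have F1: "M (P y) = P (M (P y))" for y
  proof -
    obtain u where u: "adjoint A (A (B (GB y))) = B u" using C1 by blast
    show ?thesis unfolding M_def P_def using u by (simp add: DB(2))
  qed
  have F2: "P (M y) = M (P y)" for y
  proof (rule veq)
    fix z
    have "z \<bullet> P (M y) = M (P z) \<bullet> y" by (simp add: Psa[symmetric] Msa)
    also have "\<dots> = P (M (P z)) \<bullet> y" by (simp flip: F1)
    also have "\<dots> = z \<bullet> P (M (P y))" by (simp add: Psa Msa)
    also have "\<dots> = z \<bullet> M (P y)" by (simp flip: F1)
    finally show "z \<bullet> P (M y) = z \<bullet> M (P y)" .
  qed
  have F3: "A (P (y - Q y)) = 0" for y
  proof -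
    define w where "w = y - Q y"
    have Aw: "A w = 0" by (simp add: w_def Q_def A.diff DA(2))
    have "A (P w) \<bullet> A (P w) = M (P w) \<bullet> P w" by (simp add: M_def wA inner_commute)
    also have "\<dots> = P (M w) \<bullet> P w" by (simp add: F2)
    also have "\<dots> = 0" by (simp add: M_def Aw A'.zero P_def GB.zero B.zero)
    finally show ?thesis by (simp add: w_def)
  qed
  have F4: "Q (P y) = Q (P (Q y))" for y
  proof -
    have "Q (P y) - Q (P (Q y)) = GA (A (P (y - Q y)))"
      by (simp add: Q_def P_def GA.diff A.diff B.diff GB.diff)
    thus ?thesis by (simp add: F3 GA.zero)
  qed
  have comm: "P (Q y) = Q (P y)" for y
  proof -
    have "P (Q y) = Q (P (Q y))"
    proof (rule veq)
      fix z
      have "z \<bullet> P (Q y) = Q (P z) \<bullet> y" by (simp add: Psa[symmetric] Qsa)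
      also have "\<dots> = Q (P (Q z)) \<bullet> y" by (simp flip: F4)
      also have "\<dots> = z \<bullet> Q (P (Q y))" by (simp add: Psa Qsa)
      finally show "z \<bullet> P (Q y) = z \<bullet> Q (P (Q y))" .
    qed
    thus ?thesis by (simp flip: F4)
  qed
  have QA': "Q (adjoint A v) = adjoint A v" for v
    unfolding Q_def by (metis FA(2) FA(3))
  have Qeq: "Q y = adjoint A (adjoint GA y)" for y unfolding Q_def by (simp add: FA(2))
  have G1: "Q (N (Q y)) = N (Q y)" for y
  proof -
    obtain v where v: "B (adjoint B (adjoint A (adjoint GA y))) = adjoint A v" using C2 by blast
    show ?thesis unfolding Qeq N_def using v by (simp add: FA(3))
  qed
  have G2: "Q (N y) = N (Q y)" for y
  proof (rule veq)
    fix z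
    have "z \<bullet> Q (N y) = N (Q z) \<bullet> y" by (simp add: Qsa[symmetric] Nsa)
    also have "\<dots> = Q (N (Q z)) \<bullet> y" by (simp add: G1)
    also have "\<dots> = z \<bullet> N (Q y)" by (metis Qsa Nsa G1)
    finally show "z \<bullet> Q (N y) = z \<bullet> N (Q y)" .
  qed
  have MGA: "M (GA y) = adjoint A y" for y unfolding M_def by (metis FA(1) FA(3))
  have NGB: "N (adjoint GB x) = B x" for x unfolding N_def by (simp add: FB(2) DB(2))
  show ?thesis
  proof (rule is_mpI[OF bl_comp[OF blA blB] bl_comp[OF DB(1) DA(1)]])
    fix x y
    show "(A \<circ> B) ((GB \<circ> GA) ((A \<circ> B) x)) = (A \<circ> B) x"
    proof -
      have "(A \<circ> B) ((GB \<circ> GA) ((A \<circ> B) x)) = A (P (Q (B x)))" by (simp add: P_def Q_def)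
      also have "\<dots> = A (Q (P (B x)))" by (simp add: comm)
      also have "\<dots> = A (B x)" by (simp add: P_def Q_def DA(2) DB(2))
      finally show ?thesis by simp
    qed
    show "(GB \<circ> GA) ((A \<circ> B) ((GB \<circ> GA) x)) = (GB \<circ> GA) x"
    proof -
      have "(GB \<circ> GA) ((A \<circ> B) ((GB \<circ> GA) x)) = GB (Q (P (GA x)))" by (simp add: P_def Q_def)
      also have "\<dots> = GB (P (Q (GA x)))" by (simp add: comm)
      also have "\<dots> = GB (GA x)" by (simp add: P_def Q_def DA(3) DB(3))
      finally show ?thesis by simp
    qed
    show "(A \<circ> B) ((GB \<circ> GA) x) \<bullet> y = x \<bullet> (A \<circ> B) ((GB \<circ> GA) y)"
    proof -
      have "(A \<circ> B) ((GB \<circ> GA) x) \<bullet> y = A (P (GA x)) \<bullet> y" by (simp add: P_def)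
      also have "\<dots> = P (GA x) \<bullet> adjoint A y" by (simp add: wA)
      also have "\<dots> = GA x \<bullet> P (M (GA y))" by (simp add: Psa MGA)
      also have "\<dots> = GA x \<bullet> M (P (GA y))" by (simp add: F2)
      also have "\<dots> = M (GA x) \<bullet> P (GA y)" by (simp add: Msa)
      also have "\<dots> = adjoint A x \<bullet> P (GA y)" by (simp add: MGA)
      also have "\<dots> = x \<bullet> A (P (GA y))" by (simp add: adj_works2[OF blA])
      also have "\<dots> = x \<bullet> (A \<circ> B) ((GB \<circ> GA) y)" by (simp add: P_def)
      finally show ?thesis .
    qed
    show "(GB \<circ> GA) ((A \<circ> B) x) \<bullet> y = x \<bullet> (GB \<circ> GA) ((A \<circ> B) y)"
    proof -
      have "(GB \<circ> GA) ((A \<circ> B) x) \<bullet> y = GB (Q (B x)) \<bullet> y" by (simp add: Q_def)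
      also have "\<dots> = Q (B x) \<bullet> adjoint GB y" by (simp add: wGB)
      also have "\<dots> = N (adjoint GB x) \<bullet> Q (adjoint GB y)" by (simp add: Qsa NGB)
      also have "\<dots> = adjoint GB x \<bullet> N (Q (adjoint GB y))" by (simp add: Nsa)
      also have "\<dots> = adjoint GB x \<bullet> Q (N (adjoint GB y))" by (simp add: G2)
      also have "\<dots> = Q (adjoint GB x) \<bullet> B y" by (simp add: Qsa NGB)
      also have "\<dots> = adjoint GB x \<bullet> Q (B y)" by (simp add: Qsa)
      also have "\<dots> = x \<bullet> GB (Q (B y))" by (simp add: adj_works2[OF DB(1)])
      also have "\<dots> = x \<bullet> (GB \<circ> GA) ((A \<circ> B) y)" by (simp add: Q_def)
      finally show ?thesis .
    qed
  qed
qed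

definition prj :: "'a::real_inner set \<Rightarrow> 'a \<Rightarrow> 'a" where
  "prj M x = (SOME p. p \<in> M \<and> (\<forall>m\<in>M. (x - p) \<bullet> m = 0))"

context
  fixes M :: "'a::{real_inner,complete_space} set"
  assumes subM: "subspace M" and clM: "closed M"
begin

lemma prj_in: "prj M x \<in> M" and prj_orth: "m \<in> M \<Longrightarrow> (x - prj M x) \<bullet> m = 0"
proof -
  have "\<exists>p. p \<in> M \<and> (\<forall>m\<in>M. (x - p) \<bullet> m = 0)" using proj_exists[OF subM clM] by blast
  from someI_ex[OF this] show "prj M x \<in> M" "m \<in> M \<Longrightarrow> (x - prj M x) \<bullet> m = 0"
    unfolding prj_def by blast+
qed

lemma prj_unique:
  assumes "p \<in> M" "\<And>m. m \<in> M \<Longrightarrow> (x - p) \<bullet> m = 0"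
  shows "prj M x = p"
proof -
  have d: "prj M x - p \<in> M" using prj_in assms(1) subM by (simp add: subspace_diff)
  have "(x - p) \<bullet> (prj M x - p) = 0" using assms(2)[OF d] .
  moreover have "(x - prj M x) \<bullet> (prj M x - p) = 0" using prj_orth[OF d] .
  ultimately have "(prj M x - p) \<bullet> (prj M x - p) = 0"
    by (simp add: inner_diff_left inner_diff_right algebra_simps)
  thus ?thesis by simp
qed

lemma prj_fix: "y \<in> M \<Longrightarrow> prj M y = y"
  by (rule prj_unique) auto

lemma prj_sa: "prj M x \<bullet> y = x \<bullet> prj M y"
proof -
  have "(x - prj M x) \<bullet> prj M y = 0" by (rule prj_orth[OF prj_in])
  moreover have "(y - prj M y) \<bullet> prj M x = 0" by (rule prj_orth[OF prj_in])
  ultimately show ?thesis by (simp add: inner_diff_left inner_diff_right inner_commute)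
qed

lemma prj_lin: "linear (prj M)"
proof
  fix a b and r :: real
  show "prj M (a + b) = prj M a + prj M b"
  proof (rule prj_unique)
    show "prj M a + prj M b \<in> M" by (simp add: subspace_add[OF subM] prj_in)
    fix m assume m: "m \<in> M"
    show "(a + b - (prj M a + prj M b)) \<bullet> m = 0"
      using prj_orth[OF m, of a] prj_orth[OF m, of b] by (simp add: inner_diff_left inner_add_left)
  qed
  show "prj M (r *\<^sub>R b) = r *\<^sub>R prj M b"
  proof (rule prj_unique)
    show "r *\<^sub>R prj M b \<in> M" by (simp add: subspace_scale[OF subM] prj_in)
    fix m assume "m \<in> M"
    hence "(b - prj M b) \<bullet> m = 0" by (rule prj_orth)
    thus "(r *\<^sub>R b - r *\<^sub>R prj M b) \<bullet> m = 0"
      by (simp add: scaleR_diff_right[symmetric] del: scaleR_diff_right)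
  qed
qed

lemma prj_norm: "norm (prj M x) \<le> norm x"
proof -
  have "(x - prj M x) \<bullet> prj M x = 0" by (rule prj_orth[OF prj_in])
  hence "norm x ^2 = norm (prj M x)^2 + norm (x - prj M x)^2"
    by (simp add: power2_norm_eq_inner inner_diff_left inner_diff_right inner_commute)
  hence "norm (prj M x)^2 \<le> norm x ^2" by simp
  thus ?thesis by (rule power2_le_imp_le[OF _ norm_ge_zero])
qed

lemma prj_bl: "bounded_linear (prj M)"
  using prj_lin prj_norm
  by (intro bounded_linear_intro[where K=1]) (auto simp: linear_add linear_scale)

end

lemma range_subspace: "linear T \<Longrightarrow> subspace (range T)"
  unfolding subspace_def
  by (metis (no_types, lifting) linear_0 linear_add linear_scale rangeE rangeI)

lemma ker_subspace: "linear T \<Longrightarrow> subspace {x. T x = 0}"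
  unfolding subspace_def by (auto simp: linear_0 linear_add linear_scale)

lemma ker_closed: "bounded_linear T \<Longrightarrow> closed {x. T x = 0}"
proof -
  assume bl: "bounded_linear T"
  have "closed (T -` {0})"
    by (rule continuous_closed_vimage) (auto intro: bounded_linear.continuous[OF bl])
  moreover have "T -` {0} = {x. T x = 0}" by auto
  ultimately show ?thesis by simp
qed

lemma om_bound:
  fixes T :: "('a::{real_inner,complete_space}) op"
  assumes blT: "bounded_linear T" and clT: "closed (range T)"
  shows "\<exists>c>0. \<forall>w\<in>range T. c * norm w \<le> norm (adjoint T w)"
proof -
  interpret T: bounded_linear T by (rule blT)
  define Y where "Y = range T"
  define F where "F = (\<lambda>k::nat. closure (T ` cball 0 (real (Suc k))))"
  define X where "X = top_of_set Y"
  have FY: "F k \<subseteq> Y" for k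
    unfolding F_def Y_def by (rule closure_minimal) (use clT in auto)
  have UF: "\<Union>(range F) = Y"
  proof
    show "\<Union>(range F) \<subseteq> Y" using FY by auto
    show "Y \<subseteq> \<Union>(range F)"
    proof
      fix y assume "y \<in> Y"
      then obtain x where x: "y = T x" by (auto simp: Y_def)
      obtain k :: nat where "norm x \<le> real k" using real_arch_simple by blast
      hence "x \<in> cball 0 (real (Suc k))" by simp
      hence "T x \<in> T ` cball 0 (real (Suc k))" by (rule imageI)
      hence "y \<in> F k" unfolding F_def x by (rule closure_subset[THEN subsetD])
      thus "y \<in> \<Union>(range F)" by blast
    qed
  qed
  have "\<exists>k. X interior_of F k \<noteq> {}"
  proof (rule ccontr)
    assume nt: "\<not> (\<exists>k. X interior_of F k \<noteq> {})"
    have allE: "X interior_of F k = {}" for k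
    proof (rule ccontr)
      assume "X interior_of F k \<noteq> {}"
      hence "\<exists>k. X interior_of F k \<noteq> {}" by (rule exI)
      from nt this show False by (rule notE)
    qed
    have "X interior_of \<Union>(range F) = {}"
    proof (rule Baire_category_alt)
      have "closedin euclidean Y" using clT unfolding Y_def closed_closedin .
      from completely_metrizable_space_closedin[OF completely_metrizable_space_euclidean this]
      show "completely_metrizable_space X \<or> locally_compact_space X \<and> regular_space X"
        unfolding X_def by (rule disjI1)
      show "countable (range F)" by simp
      fix S assume "S \<in> range F"
      then obtain k where S: "S = F k" by (rule rangeE)
      have "closed (F k)" unfolding F_def by (rule closed_closure)
      hence "closedin X (F k)" unfolding X_def by (rule closed_subset[OF FY])
      thus "closedin X S \<and> X interior_of S = {}"
        unfolding S using allE[of k] by (rule conjI)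
    qed
    moreover have "X interior_of \<Union>(range F) = Y"
    proof -
      have "topspace X = Y" unfolding X_def by simp
      thus ?thesis unfolding UF using interior_of_topspace[of X] by simp
    qed
    moreover have "0 \<in> Y" unfolding Y_def by (metis T.zero rangeI)
    ultimately show False by simp
  qed
  then obtain k y0 where y0: "y0 \<in> X interior_of F k" by blast
  then obtain U where U: "openin X U" "y0 \<in> U" "U \<subseteq> F k" unfolding interior_of_def by blast
  from U(1,2) obtain e where e: "e > 0" "\<And>x'. x' \<in> Y \<Longrightarrow> dist x' y0 < e \<Longrightarrow> x' \<in> U"
    unfolding X_def openin_euclidean_subtopology_iff by blast
  have y0Y: "y0 \<in> Y" using U FY by blast
  define K where "K = real (Suc k)"
  have Kpos: "K > 0" by (simp add: K_def)
  have Fbound: "\<bar>z \<bullet> w\<bar> \<le> K * norm (adjoint T w)" if "z \<in> F k" for z w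
  proof -
    have "F k \<subseteq> {z. \<bar>z \<bullet> w\<bar> \<le> K * norm (adjoint T w)}"
      unfolding F_def
    proof (rule closure_minimal)
      show "T ` cball 0 (real (Suc k)) \<subseteq> {z. \<bar>z \<bullet> w\<bar> \<le> K * norm (adjoint T w)}"
      proof
        fix z assume "z \<in> T ` cball 0 (real (Suc k))"
        then obtain x where x: "z = T x" "norm x \<le> K" by (auto simp: K_def)
        have "\<bar>z \<bullet> w\<bar> = \<bar>x \<bullet> adjoint T w\<bar>" by (simp add: x adj_works[OF blT])
        also have "\<dots> \<le> norm x * norm (adjoint T w)" by (rule Cauchy_Schwarz_ineq2)
        also have "\<dots> \<le> K * norm (adjoint T w)" using x(2) by (simp add: mult_right_mono)
        finally show "z \<in> {z. \<bar>z \<bullet> w\<bar> \<le> K * norm (adjoint T w)}" by simp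
      qed
      show "closed {z. \<bar>z \<bullet> w\<bar> \<le> K * norm (adjoint T w)}"
        by (rule closed_Collect_le) (auto intro!: continuous_intros)
    qed
    thus ?thesis using that by blast
  qed
  define c where "c = e / (2 * K)"
  have cpos: "c > 0" using e Kpos by (simp add: c_def)
  show ?thesis
  proof (intro exI[of _ c] conjI cpos ballI)
    fix w assume wY: "w \<in> range T"
    show "c * norm w \<le> norm (adjoint T w)"
    proof (cases "w = 0")
      case True thus ?thesis by simp
    next
      case False
      hence nw: "norm w > 0" by simp
      define r where "r = e / (2 * norm w)"
      define y where "y = r *\<^sub>R w"
      obtain a where a: "y0 = T a" using y0Y by (auto simp: Y_def)
      obtain b where b: "w = T b" using wY by auto
      have yT: "y = T (r *\<^sub>R b)" by (simp add: y_def b T.scale)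
      have ny: "norm y = e / 2" using nw e by (simp add: y_def r_def)
      have "y0 + y \<in> Y" unfolding Y_def a yT by (metis T.add rangeI)
      moreover have "dist (y0 + y) y0 < e" using ny e by (simp add: dist_norm)
      ultimately have p: "y0 + y \<in> F k" using e(2) U(3) by blast
      have "y0 - y \<in> Y" unfolding Y_def a yT by (metis T.diff rangeI)
      moreover have "dist (y0 - y) y0 < e" using ny e by (simp add: dist_norm)
      ultimately have m: "y0 - y \<in> F k" using e(2) U(3) by blast
      have "y \<bullet> w = ((y0 + y) \<bullet> w - (y0 - y) \<bullet> w) / 2"
        by (simp add: inner_add_left inner_diff_left)
      hence "\<bar>y \<bullet> w\<bar> \<le> (\<bar>(y0 + y) \<bullet> w\<bar> + \<bar>(y0 - y) \<bullet> w\<bar>) / 2" by simp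
      also have "\<dots> \<le> K * norm (adjoint T w)" using Fbound[OF p, of w] Fbound[OF m, of w] by simp
      finally have h: "\<bar>y \<bullet> w\<bar> \<le> K * norm (adjoint T w)" .
      have "y \<bullet> w = r * (norm w)^2" by (simp add: y_def power2_norm_eq_inner)
      also have "\<dots> = (e/2) * norm w" using nw by (simp add: r_def power2_eq_square)
      finally have "(e/2) * norm w \<le> K * norm (adjoint T w)" using h by simp
      thus ?thesis using Kpos by (simp add: c_def field_simps)
    qed
  qed
qed

lemma bounded_below:
  fixes T :: "('a::{real_inner,complete_space}) op"
  assumes blT: "bounded_linear T" and clT: "closed (range T)"
  shows "\<exists>c>0. \<forall>x. (\<forall>m. T m = 0 \<longrightarrow> x \<bullet> m = 0) \<longrightarrow> c * norm x \<le> norm (T x)"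
proof -
  interpret T: bounded_linear T by (rule blT)
  interpret T': bounded_linear "adjoint T" by (rule adj_bl[OF blT])
  obtain c where c: "c > 0" "\<And>w. w \<in> range T \<Longrightarrow> c * norm w \<le> norm (adjoint T w)"
    using om_bound[OF blT clT] by blast
  define Y where "Y = range T"
  have subY: "subspace Y" unfolding Y_def by (rule range_subspace[OF T.linear])
  have clY: "closed Y" using clT by (simp add: Y_def)
  have adjY: "adjoint T w = adjoint T (prj Y w)" for w
  proof -
    have "adjoint T (w - prj Y w) = 0"
    proof (rule veq)
      fix z
      have "T z \<in> Y" by (simp add: Y_def)
      hence "(w - prj Y w) \<bullet> T z = 0" by (rule prj_orth[OF subY clY])
      thus "z \<bullet> adjoint T (w - prj Y w) = z \<bullet> 0"
        by (simp add: adj_works[OF blT, symmetric] inner_commute)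
    qed
    thus ?thesis by (simp add: T'.diff)
  qed
  define R where "R = range (adjoint T)"
  have RY: "R = adjoint T ` Y"
  proof
    show "R \<subseteq> adjoint T ` Y"
    proof
      fix x assume "x \<in> R"
      then obtain w where "x = adjoint T w" by (auto simp: R_def)
      hence "x = adjoint T (prj Y w)" using adjY by simp
      thus "x \<in> adjoint T ` Y" using prj_in[OF subY clY] by blast
    qed
    show "adjoint T ` Y \<subseteq> R" by (auto simp: R_def)
  qed
  have "complete (adjoint T ` Y)"
  proof (rule complete_isometric_image[OF c(1) subY adj_bl[OF blT]])
    show "\<forall>x\<in>Y. c * norm x \<le> norm (adjoint T x)" using c(2) by (simp add: Y_def)
    show "complete Y" using clY by (simp add: complete_eq_closed)
  qed
  hence clR: "closed R" using RY by (simp add: complete_eq_closed)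
  have subR: "subspace R" unfolding R_def by (rule range_subspace[OF T'.linear])
  show ?thesis
  proof (intro exI[of _ c] conjI c(1) allI impI)
    fix x assume xo: "\<forall>m. T m = 0 \<longrightarrow> x \<bullet> m = 0"
    define p where "p = prj R x"
    define q where "q = x - p"
    have pR: "p \<in> R" unfolding p_def by (rule prj_in[OF subR clR])
    have qR: "q \<bullet> r = 0" if "r \<in> R" for r unfolding q_def p_def by (rule prj_orth[OF subR clR that])
    have "T q \<bullet> T q = q \<bullet> adjoint T (T q)" by (rule adj_works[OF blT])
    also have "\<dots> = 0" by (rule qR) (simp add: R_def)
    finally have "T q = 0" by simp
    hence "x \<bullet> q = 0" using xo by blast
    moreover have "p \<bullet> q = 0" using qR[OF pR] by (simp add: inner_commute)
    ultimately have "q \<bullet> q = 0" by (simp add: q_def inner_diff_left)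
    hence "x = p" by (simp add: q_def)
    hence "x \<in> adjoint T ` Y" using pR RY by simp
    then obtain w where w: "w \<in> Y" "x = adjoint T w" by blast
    have cw: "c * norm w \<le> norm x" using c(2) w by (simp add: Y_def)
    have "norm x ^2 = T x \<bullet> w" by (simp add: w(2) adj_works[OF blT] power2_norm_eq_inner)
    also have "\<dots> \<le> norm (T x) * norm w" by (rule norm_cauchy_schwarz)
    finally have "c * norm x ^2 \<le> c * (norm (T x) * norm w)" using c(1) by simp
    also have "\<dots> = norm (T x) * (c * norm w)" by simp
    also have "\<dots> \<le> norm (T x) * norm x" using cw by (simp add: mult_left_mono)
    finally have h: "(c * norm x) * norm x \<le> norm (T x) * norm x" by (simp add: power2_eq_square)
    show "c * norm x \<le> norm (T x)"
    proof (cases "x = 0")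
      case True thus ?thesis by simp
    next
      case False
      hence "norm x > 0" by simp
      thus ?thesis using h by simp
    qed
  qed
qed

lemma mp_exists:
  fixes T :: "('a::{real_inner,complete_space}) op"
  assumes blT: "bounded_linear T" and clT: "closed (range T)"
  shows "\<exists>G. is_mp T G"
proof -
  interpret T: bounded_linear T by (rule blT)
  obtain c where c: "c > 0" "\<And>x. (\<forall>m. T m = 0 \<longrightarrow> x \<bullet> m = 0) \<Longrightarrow> c * norm x \<le> norm (T x)"
    using bounded_below[OF blT clT] by blast
  define Y where "Y = range T"
  have subY: "subspace Y" unfolding Y_def by (rule range_subspace[OF T.linear])
  have clY: "closed Y" using clT by (simp add: Y_def)
  define N where "N = {x. T x = 0}"
  have subN: "subspace N" unfolding N_def by (rule ker_subspace[OF T.linear])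
  have clN: "closed N" unfolding N_def by (rule ker_closed[OF blT])
  define Pr where "Pr = (\<lambda>x. (\<forall>m\<in>N. x \<bullet> m = 0))"
  define G where "G = (\<lambda>y. SOME x. Pr x \<and> T x = prj Y y)"
  have ex: "\<exists>x. Pr x \<and> T x = prj Y y" for y
  proof -
    obtain u where u: "prj Y y = T u" using prj_in[OF subY clY, of y] by (auto simp: Y_def)
    have "prj N u \<in> N" by (rule prj_in[OF subN clN])
    hence "T (prj N u) = 0" by (simp add: N_def)
    hence "T (u - prj N u) = prj Y y" by (simp add: T.diff u)
    moreover have "Pr (u - prj N u)" unfolding Pr_def using prj_orth[OF subN clN] by blast
    ultimately show ?thesis by blast
  qed
  have Gch: "Pr (G y) \<and> T (G y) = prj Y y" for y
    unfolding G_def by (rule someI_ex[OF ex])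
  have Gu: "G y = x" if "Pr x" "T x = prj Y y" for x y
  proof -
    define d where "d = G y - x"
    have "T d = 0" using Gch[of y] that by (simp add: d_def T.diff)
    hence dN: "d \<in> N" by (simp add: N_def)
    have "G y \<bullet> d = 0" "x \<bullet> d = 0" using Gch[of y] that(1) dN by (auto simp: Pr_def)
    hence "d \<bullet> d = 0" by (simp add: d_def inner_diff_left)
    thus ?thesis by (simp add: d_def)
  qed
  have PrA: "Pr (a + b)" if "Pr a" "Pr b" for a b using that by (simp add: Pr_def inner_add_left)
  have PrS: "Pr (r *\<^sub>R a)" if "Pr a" for a r using that by (simp add: Pr_def)
  have prjY_lin: "linear (prj Y)" by (rule prj_lin[OF subY clY])
  have lin: "linear G"
  proof
    fix a b and r :: real
    show "G (a + b) = G a + G b"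
      by (rule Gu) (simp_all add: PrA Gch T.add linear_add[OF prjY_lin])
    show "G (r *\<^sub>R b) = r *\<^sub>R G b"
      by (rule Gu) (simp_all add: PrS Gch T.scale linear_scale[OF prjY_lin])
  qed
  have bnd: "norm (G y) \<le> norm y * (1 / c)" for y
  proof -
    have "\<forall>m. T m = 0 \<longrightarrow> G y \<bullet> m = 0" using Gch[of y] by (auto simp: Pr_def N_def)
    hence "c * norm (G y) \<le> norm (T (G y))" by (rule c(2))
    also have "\<dots> = norm (prj Y y)" using Gch by simp
    also have "\<dots> \<le> norm y" by (rule prj_norm[OF subY clY])
    finally show ?thesis using c(1) by (simp add: field_simps)
  qed
  have blG: "bounded_linear G"
    using lin bnd by (intro bounded_linear_intro[where K="1/c"]) (auto simp: linear_add linear_scale)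
  have fixY: "prj Y (T x) = T x" for x by (rule prj_fix[OF subY clY]) (simp add: Y_def)
  have GT: "G (T x) = x - prj N x" for x
  proof (rule Gu)
    show "Pr (x - prj N x)" unfolding Pr_def using prj_orth[OF subN clN] by blast
    have "prj N x \<in> N" by (rule prj_in[OF subN clN])
    hence "T (prj N x) = 0" by (simp add: N_def)
    thus "T (x - prj N x) = prj Y (T x)" by (simp add: T.diff fixY)
  qed
  have "is_mp T G"
  proof (rule is_mpI[OF blT blG])
    fix x y
    show "T (G (T x)) = T x" using Gch[of "T x"] by (simp add: fixY)
    show "G (T (G x)) = G x"
      by (rule Gu) (simp_all add: Gch prj_fix[OF subY clY prj_in[OF subY clY]])
    show "G (T x) \<bullet> y = x \<bullet> G (T y)"
      by (simp add: GT inner_diff_left inner_diff_right prj_sa[OF subN clN])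
    show "T (G x) \<bullet> y = x \<bullet> T (G y)"
      by (simp add: Gch prj_sa[OF subY clY])
  qed
  thus ?thesis by blast
qed

theorem mainTheorem6:
  fixes T :: "'a::{real_inner,complete_space} \<Rightarrow> 'a" and n :: nat
  assumes "bounded_linear T"
    and "closed (range T)"
    and "n \<ge> 2"
    and "\<forall>i\<in>{1..n-1}. (adjoint T \<circ> T) ` op_ker (adjoint T ^^ i) \<subseteq> op_ker (adjoint T ^^ i)"
    and "\<forall>i\<in>{1..n-1}. (T \<circ> adjoint T) ` op_ker (T ^^ i) \<subseteq> op_ker (T ^^ i)"
  shows "\<forall>i\<in>{1..n}. closed (range (T ^^ i)) \<and> cauchy_dual (T ^^ i) = cauchy_dual T ^^ i"
proof -
  note blT = assms(1) and clT = assms(2)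
  have H1: "(adjoint T ^^ j) (adjoint T (T w)) = 0"
    if "1 \<le> j" "j \<le> n - 1" "(adjoint T ^^ j) w = 0" for j w
  proof -
    have "w \<in> op_ker (adjoint T ^^ j)" using that(3) by (simp add: op_ker_def)
    moreover have "j \<in> {1..n-1}" using that(1,2) by simp
    hence "(adjoint T \<circ> T) ` op_ker (adjoint T ^^ j) \<subseteq> op_ker (adjoint T ^^ j)" using assms(4) by blast
    ultimately have "(adjoint T \<circ> T) w \<in> op_ker (adjoint T ^^ j)" by blast
    thus ?thesis by (simp add: op_ker_def)
  qed
  have H2: "(T ^^ j) (T (adjoint T w)) = 0"
    if "1 \<le> j" "j \<le> n - 1" "(T ^^ j) w = 0" for j w
  proof -
    have "w \<in> op_ker (T ^^ j)" using that(3) by (simp add: op_ker_def)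
    moreover have "j \<in> {1..n-1}" using that(1,2) by simp
    hence "(T \<circ> adjoint T) ` op_ker (T ^^ j) \<subseteq> op_ker (T ^^ j)" using assms(5) by blast
    ultimately have "(T \<circ> adjoint T) w \<in> op_ker (T ^^ j)" by blast
    thus ?thesis by (simp add: op_ker_def)
  qed
  obtain G where mG: "is_mp T G" using mp_exists[OF blT clT] by blast
  have blG: "bounded_linear G" by (rule is_mpD(1)[OF blT mG])
  have blTp: "bounded_linear (T ^^ j)" for j by (rule bl_pow[OF blT])
  have H1R: "\<exists>v. adjoint T (T ((T ^^ j) u)) = (T ^^ j) v"
    if j: "1 \<le> j" "j \<le> n - 1" and mj: "is_mp (T ^^ j) (G ^^ j)" for j u
  proof -
    define z where "z = adjoint T (T ((T ^^ j) u))"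
    have "(T ^^ j) ((G ^^ j) z) = z"
    proof (rule mp_in_range[OF blTp mj])
      fix w assume "adjoint (T ^^ j) w = 0"
      hence w0: "(adjoint T ^^ j) w = 0" by (simp add: adj_pow[OF blT])
      have "z \<bullet> w = T ((T ^^ j) u) \<bullet> T w" by (simp add: z_def adj_works2[OF blT])
      also have "\<dots> = (T ^^ j) u \<bullet> adjoint T (T w)" by (simp add: adj_works[OF blT])
      also have "\<dots> = u \<bullet> adjoint (T ^^ j) (adjoint T (T w))" by (simp add: adj_works[OF blTp])
      also have "\<dots> = 0" using H1[OF j w0] by (simp add: adj_pow[OF blT])
      finally show "z \<bullet> w = 0" .
    qed
    thus ?thesis unfolding z_def by metis
  qed
  have main: "\<forall>j. 1 \<le> j \<longrightarrow> j \<le> i \<longrightarrow> is_mp (T ^^ j) (G ^^ j)" if "i \<le> n" for i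
    using that
  proof (induction i)
    case 0 thus ?case by simp
  next
    case (Suc i)
    have IH: "is_mp (T ^^ j) (G ^^ j)" if "1 \<le> j" "j \<le> i" for j
      using Suc.IH Suc.prems that by simp
    show ?case
    proof (intro allI impI)
      fix j assume j: "1 \<le> j" "j \<le> Suc i"
      show "is_mp (T ^^ j) (G ^^ j)"
      proof (cases "j \<le> i")
        case True thus ?thesis using IH j by simp
      next
        case False
        hence jeq: "j = Suc i" using j by simp
        show ?thesis
        proof (cases "i = 0")
          case True thus ?thesis using jeq mG by simp
        next
          case False
          hence i1: "1 \<le> i" by simp
          have iln: "i \<le> n - 1" using Suc.prems by simp
          have mi: "is_mp (T ^^ i) (G ^^ i)" using IH[OF i1] by simp
          have iter: "\<forall>x. \<exists>u. (adjoint T ^^ k) ((T ^^ Suc i) x) = (T ^^ (Suc i - k)) u"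
            if "k \<le> i" for k
            using that
          proof (induction k)
            case 0 thus ?case by auto
          next
            case (Suc k)
            show ?case
            proof
              fix x
              obtain u where u: "(adjoint T ^^ k) ((T ^^ Suc i) x) = (T ^^ (Suc i - k)) u"
                using Suc by auto
              have ik: "Suc i - k = Suc (i - k)" using Suc.prems by simp
              have j1: "1 \<le> i - k" "i - k \<le> n - 1" using Suc.prems iln by auto
              have mik: "is_mp (T ^^ (i - k)) (G ^^ (i - k))" using IH j1 by simp
              obtain v where v: "adjoint T (T ((T ^^ (i - k)) u)) = (T ^^ (i - k)) v"
                using H1R[OF j1 mik] by blast
              have sk: "(adjoint T ^^ Suc k) y = adjoint T ((adjoint T ^^ k) y)" for y by simp
              have "(adjoint T ^^ Suc k) ((T ^^ Suc i) x) = adjoint T ((T ^^ (Suc i - k)) u)"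
                by (simp only: sk u)
              also have "\<dots> = (T ^^ (Suc i - Suc k)) v" using v by (simp add: ik)
              finally show "\<exists>u. (adjoint T ^^ Suc k) ((T ^^ Suc i) x) = (T ^^ (Suc i - Suc k)) u"
                by blast
            qed
          qed
          have C1: "\<exists>u. adjoint (T ^^ i) ((T ^^ i) (T x)) = T u" for x
          proof -
            obtain u where "(adjoint T ^^ i) ((T ^^ Suc i) x) = (T ^^ (Suc i - i)) u"
              using iter[of i] by auto
            moreover have "(T ^^ i) (T x) = (T ^^ Suc i) x" by (simp only: funpow_Suc_right comp_apply)
            ultimately show ?thesis by (auto simp: adj_pow[OF blT])
          qed
          have C2: "\<exists>v. T (adjoint T (adjoint (T ^^ i) y)) = adjoint (T ^^ i) v" for y
          proof -
            define z where "z = T (adjoint T (adjoint (T ^^ i) y))"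
            have "adjoint (T ^^ i) (adjoint (G ^^ i) z) = z"
            proof (rule mp_in_range[OF adj_bl[OF blTp] is_mp_adj[OF blTp mi]])
              fix w assume "adjoint (adjoint (T ^^ i)) w = 0"
              hence w0: "(T ^^ i) w = 0" by (simp add: adj_adj[OF blTp])
              have "z \<bullet> w = adjoint T (adjoint (T ^^ i) y) \<bullet> adjoint T w"
                by (simp add: z_def adj_works[OF blT])
              also have "\<dots> = adjoint (T ^^ i) y \<bullet> T (adjoint T w)"
                by (simp add: adj_works2[OF blT])
              also have "\<dots> = y \<bullet> (T ^^ i) (T (adjoint T w))"
                by (simp add: adj_works2[OF blTp])
              also have "\<dots> = 0" using H2[OF i1 iln w0] by simp
              finally show "z \<bullet> w = 0" .
            qed
            thus ?thesis unfolding z_def by metis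
          qed
          have "is_mp (T ^^ i \<circ> T) (G \<circ> G ^^ i)"
            by (rule greville[OF blTp blT mi mG C1 C2])
          thus ?thesis unfolding jeq by (simp add: funpow_Suc_right[symmetric])
        qed
      qed
    qed
  qed
  have cdT: "cauchy_dual T = adjoint G" by (rule cauchy_dual_eq[OF blT mG])
  show ?thesis
  proof
    fix i assume i: "i \<in> {1..n}"
    have mi: "is_mp (T ^^ i) (G ^^ i)" using main[of n] i by auto
    show "closed (range (T ^^ i)) \<and> cauchy_dual (T ^^ i) = cauchy_dual T ^^ i"
    proof
      show "closed (range (T ^^ i))" by (rule mp_range_closed[OF blTp mi])
      have "cauchy_dual (T ^^ i) = adjoint (G ^^ i)" by (rule cauchy_dual_eq[OF blTp mi])
      also have "\<dots> = adjoint G ^^ i" by (rule adj_pow[OF blG])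
      finally show "cauchy_dual (T ^^ i) = cauchy_dual T ^^ i" by (simp add: cdT)
    qed
  qed
qed

end
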